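(* Let $(X,d)$ be a complete metric space, fix $\lambda\in(0,1)$, and let $W:X\times X\times[0,1]\to P_{cl}(X)$ be a mapping such that (i) $W(x,x,\mu)=\{x\}$ for all $x\in X$, $\mu\in(0,1)$, and (ii) for $\mu\in(0,1)$ and $x,y\in X$, $W(x,y,\mu)=\{x\}$ implies $y=x$. Let $T:X\to P_{cl}(X)$ be a multivalued operator with $SFix(T)\neq\emptyset$ and let $T_W(x)=W(x,T(x),\lambda):=\bigcup_{y\in T(x)}W(x,y,\lambda)$ be the Takahashi admissible perturbation of $T$. Suppose there exist $\alpha,\beta,\gamma\ge0$ with $\alpha+\beta+\gamma<1$ such that $$H(W(x,T(x),\lambda),W(y,T(y),\lambda))\le\alpha d(x,y)+\beta D(x,W(y,T(y),\lambda))+\gamma D(y,W(x,T(x),\lambda))$$ for all $x,y\in X$. Then: (i) $Fix(T)=SFix(T)=\{x^*\}$ for some $x^*\in X$; (ii) if moreover there exists $l\in(0,1)$ with $H(T(x),\{x^*\})\le l\,H(W(x,T(x),\lambda),\{x^*\})$ for all $x\in X$, then $H(T^n(x),\{x^*\})\to0$ for each $x\in X$; (iii) if moreover there exists $L>0$ with $D(x,W(x,T(x),\lambda))\le L\,D(x,T(x))$ for all $x\in X$, then for some $\xi\in(0,1)$, $$d(x,x^* )\le\frac{(1+\gamma)L}{(1-\alpha-\beta)\xi}D(x,T(x))\quad\text{for all }x\in X.$$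
   Context: $P_{cl}(X)$ is the family of nonempty closed subsets of $X$. $Fix(T)=\{x:x\in T(x)\}$, $SFix(T)=\{x:T(x)=\{x\}\}$. For nonempty $A,B\subseteq X$: $D(a,B)=\inf_{b\in B}d(a,b)$, $e(A,B)=\sup_{a\in A}D(a,B)$, $H(A,B)=\max\{e(A,B),e(B,A)\}$. Iterates: $T^0(x)=\{x\}$, $T^n(x)=\bigcup_{y\in T^{n-1}(x)}T(y)$. *)

theory Defs
  imports "HOL-Analysis.Analysis"
begin

definition Fix :: "('a \<Rightarrow> 'a set) \<Rightarrow> 'a set" where
  "Fix T = {x. x \<in> T x}"

definition SFix :: "('a \<Rightarrow> 'a set) \<Rightarrow> 'a set" where
  "SFix T = {x. T x = {x}}"

abbreviation Dist :: "'a::metric_space \<Rightarrow> 'a set \<Rightarrow> real" where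
  "Dist a B \<equiv> infdist a B"

text \<open>Excess e(A,B) and Pompeiu-Hausdorff H(A,B), valued in the extended reals
  (they may be infinite for unbounded sets).\<close>
definition excess :: "'a::metric_space set \<Rightarrow> 'a set \<Rightarrow> ereal" where
  "excess A B = (SUP a\<in>A. ereal (infdist a B))"

definition Hdist :: "'a::metric_space set \<Rightarrow> 'a set \<Rightarrow> ereal" where
  "Hdist A B = max (excess A B) (excess B A)"

definition Wset :: "('a \<Rightarrow> 'a \<Rightarrow> real \<Rightarrow> 'a set) \<Rightarrow> 'a \<Rightarrow> 'a set \<Rightarrow> real \<Rightarrow> 'a set" where
  "Wset W x A \<mu> = (\<Union>y\<in>A. W x y \<mu>)"

fun Titer :: "('a \<Rightarrow> 'a set) \<Rightarrow> nat \<Rightarrow> 'a \<Rightarrow> 'a set" where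
  "Titer T 0 x = {x}"
| "Titer T (Suc n) x = (\<Union>y\<in>Titer T n x. T y)"

end

theory Submission
  imports Defs
begin

lemma Hdist_sing_le:
  fixes A :: "'a::metric_space set"
  assumes "A \<noteq> {}" "\<And>a. a \<in> A \<Longrightarrow> dist a z \<le> c"
  shows "Hdist A {z} \<le> ereal c"
proof -
  obtain a0 where a0: "a0 \<in> A" using assms(1) by blast
  have "excess A {z} \<le> ereal c"
    unfolding excess_def using assms(2) by (auto intro!: SUP_least)
  moreover have "excess {z} A \<le> ereal c"
  proof -
    have "infdist z A \<le> c" using infdist_le2[OF a0] assms(2)[OF a0] by (simp add: dist_commute)
    then show ?thesis unfolding excess_def by simp
  qed
  ultimately show ?thesis unfolding Hdist_def by simp
qed

lemma Hdist_sing_ge: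
  fixes A :: "'a::metric_space set"
  assumes "Hdist A {z} \<le> ereal c" "a \<in> A"
  shows "dist a z \<le> c"
proof -
  have "ereal (infdist a {z}) \<le> excess A {z}"
    unfolding excess_def using assms(2) by (rule SUP_upper)
  also have "\<dots> \<le> Hdist A {z}" unfolding Hdist_def by simp
  finally have e: "ereal (infdist a {z}) \<le> Hdist A {z}" .
  have "ereal (dist a z) \<le> ereal c" using order_trans[OF e assms(1)] by simp
  then show ?thesis by simp
qed

lemma Hdist_nonneg:
  fixes A :: "'a::metric_space set"
  shows "0 \<le> Hdist A {z}"
proof -
  have "0 \<le> excess {z} A" unfolding excess_def by (simp add: infdist_nonneg)
  then show ?thesis unfolding Hdist_def by (simp add: le_max_iff_disj)
qed

lemma le_infdist':
  fixes A :: "'a::metric_space set"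
  assumes "A \<noteq> {}" "\<And>a. a \<in> A \<Longrightarrow> c \<le> dist x a"
  shows "c \<le> infdist x A"
  unfolding infdist_def using assms by (auto intro!: cINF_greatest)

theorem mainTheorem9:
  fixes W :: "'a::complete_space \<Rightarrow> 'a \<Rightarrow> real \<Rightarrow> 'a set"
    and T :: "'a \<Rightarrow> 'a set"
    and lam \<alpha> \<beta> \<gamma> :: real
  assumes lam: "0 < lam" "lam < 1"
    and W_cl: "\<And>x y \<mu>. \<mu> \<in> {0..1} \<Longrightarrow> W x y \<mu> \<noteq> {} \<and> closed (W x y \<mu>)"
    and W_diag: "\<And>x \<mu>. \<mu> \<in> {0<..<1} \<Longrightarrow> W x x \<mu> = {x}"
    and W_sing: "\<And>x y \<mu>. \<mu> \<in> {0<..<1} \<Longrightarrow> W x y \<mu> = {x} \<Longrightarrow> y = x"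
    and T_cl: "\<And>x. T x \<noteq> {} \<and> closed (T x)"
    and SFix_ne: "SFix T \<noteq> {}"
    and coef: "\<alpha> \<ge> 0" "\<beta> \<ge> 0" "\<gamma> \<ge> 0" "\<alpha> + \<beta> + \<gamma> < 1"
    and contr: "\<And>x y. Hdist (Wset W x (T x) lam) (Wset W y (T y) lam)
        \<le> ereal (\<alpha> * dist x y + \<beta> * Dist x (Wset W y (T y) lam)
                 + \<gamma> * Dist y (Wset W x (T x) lam))"
  shows "\<exists>xs. Fix T = {xs} \<and> SFix T = {xs}
     \<and> ((\<exists>l. 0 < l \<and> l < 1 \<and>
            (\<forall>x. Hdist (T x) {xs} \<le> ereal l * Hdist (Wset W x (T x) lam) {xs}))
          \<longrightarrow> (\<forall>x. (\<lambda>n. Hdist (Titer T n x) {xs}) \<longlonglongrightarrow> 0))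
     \<and> (\<forall>L>0. (\<forall>x. Dist x (Wset W x (T x) lam) \<le> L * Dist x (T x))
          \<longrightarrow> (\<exists>\<xi>. 0 < \<xi> \<and> \<xi> < 1 \<and>
                 (\<forall>x. dist x xs \<le> (1 + \<gamma>) * L / ((1 - \<alpha> - \<beta>) * \<xi>) * Dist x (T x))))"
proof -
  obtain xs where xsS: "T xs = {xs}" using SFix_ne unfolding SFix_def by blast
  define TW where "TW x = Wset W x (T x) lam" for x
  define k where "k = (\<alpha> + \<beta>) / (1 - \<gamma>)"
  have lam01: "lam \<in> {0<..<1}" "lam \<in> {0..1}" using lam by auto
  have TWxs: "TW xs = {xs}" unfolding TW_def Wset_def xsS using W_diag[OF lam01(1)] by simp
  have TWne: "TW x \<noteq> {}" for x
  proof -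
    obtain y where "y \<in> T x" using T_cl by blast
    then show ?thesis unfolding TW_def Wset_def using W_cl[OF lam01(2)] by blast
  qed
  have g1: "1 - \<gamma> > 0" using coef by linarith
  have k0: "0 \<le> k" "k < 1" unfolding k_def using coef g1 by (auto simp: field_simps)
  have K: "dist a xs \<le> k * dist x xs" if a: "a \<in> TW x" for x a
  proof -
    define d where "d = dist x xs"
    define \<delta> where "\<delta> = infdist xs (TW x)"
    have H: "Hdist (TW x) {xs} \<le> ereal (\<alpha> * d + \<beta> * d + \<gamma> * \<delta>)"
      using contr[of x xs] unfolding TW_def[symmetric] TWxs d_def \<delta>_def by simp
    have B: "dist b xs \<le> \<alpha> * d + \<beta> * d + \<gamma> * \<delta>" if "b \<in> TW x" for b
      using Hdist_sing_ge[OF H that] .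
    have "\<delta> \<le> dist xs a" unfolding \<delta>_def using infdist_le[OF a] .
    also have "\<dots> \<le> \<alpha> * d + \<beta> * d + \<gamma> * \<delta>" using B[OF a] by (simp add: dist_commute)
    finally have "\<delta> * (1 - \<gamma>) \<le> (\<alpha> + \<beta>) * d" by (simp add: algebra_simps)
    then have "\<gamma> * (\<delta> * (1 - \<gamma>)) \<le> \<gamma> * ((\<alpha> + \<beta>) * d)" using coef by (simp add: mult_left_mono)
    then have "(\<alpha> * d + \<beta> * d + \<gamma> * \<delta>) * (1 - \<gamma>) \<le> (\<alpha> + \<beta>) * d"
      by (simp add: algebra_simps)
    then have "\<alpha> * d + \<beta> * d + \<gamma> * \<delta> \<le> k * d" unfolding k_def using g1
      by (simp add: field_simps)
    then show ?thesis using B[OF a] unfolding d_def by linarith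
  qed
  have FixT: "Fix T = {xs}"
  proof
    show "{xs} \<subseteq> Fix T" using xsS unfolding Fix_def by auto
    show "Fix T \<subseteq> {xs}"
    proof
      fix u assume "u \<in> Fix T"
      then have "u \<in> T u" unfolding Fix_def by simp
      then have "u \<in> TW u" unfolding TW_def Wset_def using W_diag[OF lam01(1)] by blast
      from K[OF this] have "dist u xs \<le> k * dist u xs" .
      then have "(1 - k) * dist u xs \<le> 0" by (simp add: algebra_simps)
      then have "dist u xs \<le> 0" using k0 by (simp add: mult_le_0_iff)
      then have "dist u xs = 0" by simp
      then show "u \<in> {xs}" by simp
    qed
  qed
  have SFixT: "SFix T = {xs}"
  proof -
    have "SFix T \<subseteq> Fix T" unfolding SFix_def Fix_def by auto
    moreover have "xs \<in> SFix T" using xsS unfolding SFix_def by simp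
    ultimately show ?thesis using FixT by auto
  qed
  have P2: "(\<forall>x. (\<lambda>n. Hdist (Titer T n x) {xs}) \<longlonglongrightarrow> 0)"
    if hyp: "\<exists>l. 0 < l \<and> l < 1 \<and> (\<forall>x. Hdist (T x) {xs} \<le> ereal l * Hdist (Wset W x (T x) lam) {xs})"
  proof
    fix x0
    obtain l where l: "0 < l" "l < 1" "\<And>x. Hdist (T x) {xs} \<le> ereal l * Hdist (TW x) {xs}"
      using hyp unfolding TW_def by blast
    define r where "r = l * k"
    have r0a: "0 \<le> r" unfolding r_def using l(1) k0 by simp
    have "l * k \<le> 1 * k" using l(1,2) k0 by (intro mult_right_mono) auto
    then have r0b: "r < 1" unfolding r_def using k0 by simp
    note r0 = r0a r0b
    have Tstep: "dist b xs \<le> r * dist x xs" if "b \<in> T x" for x b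
    proof -
      have "Hdist (TW x) {xs} \<le> ereal (k * dist x xs)"
        using Hdist_sing_le[OF TWne K] by blast
      then have "ereal l * Hdist (TW x) {xs} \<le> ereal l * ereal (k * dist x xs)"
        using l by (intro ereal_mult_left_mono) auto
      then have "Hdist (T x) {xs} \<le> ereal (r * dist x xs)"
        using l(3)[of x] unfolding r_def by (simp add: mult.assoc)
      then show ?thesis using Hdist_sing_ge that by blast
    qed
    have It: "Titer T n x0 \<noteq> {} \<and> (\<forall>b\<in>Titer T n x0. dist b xs \<le> r ^ n * dist x0 xs)" for n
    proof (induction n)
      case 0 then show ?case by simp
    next
      case (Suc n)
      then obtain y where y: "y \<in> Titer T n x0" by blast
      obtain z where "z \<in> T y" using T_cl by blast
      then have ne: "Titer T (Suc n) x0 \<noteq> {}" using y by auto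
      have "dist b xs \<le> r ^ Suc n * dist x0 xs" if "b \<in> Titer T (Suc n) x0" for b
      proof -
        from that obtain y' where y': "y' \<in> Titer T n x0" "b \<in> T y'" by auto
        have "dist b xs \<le> r * dist y' xs" using Tstep[OF y'(2)] .
        also have "\<dots> \<le> r * (r ^ n * dist x0 xs)" using Suc y'(1) r0 by (simp add: mult_left_mono)
        finally show ?thesis by simp
      qed
      then show ?case using ne by blast
    qed
    have up: "Hdist (Titer T n x0) {xs} \<le> ereal (r ^ n * dist x0 xs)" for n
      using It[of n] by (intro Hdist_sing_le) auto
    have lim: "(\<lambda>n. ereal (r ^ n * dist x0 xs)) \<longlonglongrightarrow> ereal 0"
    proof -
      have "(\<lambda>n. r ^ n * dist x0 xs) \<longlonglongrightarrow> 0 * dist x0 xs"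
        using r0 by (intro tendsto_mult LIMSEQ_power_zero tendsto_const) auto
      then show ?thesis by (simp add: tendsto_ereal)
    qed
    show "(\<lambda>n. Hdist (Titer T n x0) {xs}) \<longlonglongrightarrow> 0"
    proof (rule tendsto_sandwich[of "\<lambda>n. 0" _ sequentially "\<lambda>n. ereal (r ^ n * dist x0 xs)"])
      show "\<forall>\<^sub>F n in sequentially. 0 \<le> Hdist (Titer T n x0) {xs}"
        by (intro always_eventually allI Hdist_nonneg)
      show "\<forall>\<^sub>F n in sequentially. Hdist (Titer T n x0) {xs} \<le> ereal (r ^ n * dist x0 xs)"
        by (intro always_eventually allI up)
      show "(\<lambda>n. 0::ereal) \<longlonglongrightarrow> 0" by (rule tendsto_const)
      show "(\<lambda>n. ereal (r ^ n * dist x0 xs)) \<longlonglongrightarrow> 0" using lim by (simp add: zero_ereal_def)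
    qed
  qed
  have P3: "\<exists>\<xi>. 0 < \<xi> \<and> \<xi> < 1 \<and>
                 (\<forall>x. dist x xs \<le> (1 + \<gamma>) * L / ((1 - \<alpha> - \<beta>) * \<xi>) * Dist x (T x))"
    if L: "L > 0" "\<forall>x. Dist x (Wset W x (T x) lam) \<le> L * Dist x (T x)" for L
  proof -
    define c where "c = 1 - \<alpha> - \<beta> - \<gamma>"
    have c: "0 < c" "c \<le> 1" unfolding c_def using coef by auto
    have ab: "0 < 1 - \<alpha> - \<beta>" "1 - \<alpha> - \<beta> \<le> 1" using coef by auto
    show ?thesis
    proof (intro exI conjI allI)
      show "0 < c / 2" "c / 2 < 1" using c by auto
      fix x
      define d where "d = dist x xs"
      define Dx where "Dx = Dist x (T x)"
      have Dx0: "0 \<le> Dx" unfolding Dx_def by (simp add: infdist_nonneg)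
      have "(1 - k) * d \<le> infdist x (TW x)"
      proof (rule le_infdist'[OF TWne])
        fix a assume a: "a \<in> TW x"
        have "d \<le> dist x a + dist a xs" unfolding d_def by (rule dist_triangle)
        then show "(1 - k) * d \<le> dist x a" using K[OF a] unfolding d_def by (simp add: algebra_simps)
      qed
      also have "\<dots> \<le> L * Dx" using L(2) unfolding TW_def Dx_def by blast
      finally have e1: "(1 - k) * d \<le> L * Dx" .
      have "1 - k = c / (1 - \<gamma>)" unfolding k_def c_def using g1 by (simp add: field_simps)
      with e1 have "c * d \<le> (1 - \<gamma>) * (L * Dx)" using g1 by (simp add: field_simps)
      also have "\<dots> \<le> 2 * (1 + \<gamma>) * (L * Dx)"
        using coef L(1) Dx0 by (intro mult_right_mono) auto
      finally have e2: "d \<le> 2 * (1 + \<gamma>) * (L * Dx) / c" using c by (simp add: field_simps)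
      have "2 * (1 + \<gamma>) * (L * Dx) / c = (1 + \<gamma>) * L / (c / 2) * Dx" by (simp add: field_simps)
      also have "\<dots> \<le> (1 + \<gamma>) * L / ((1 - \<alpha> - \<beta>) * (c / 2)) * Dx"
      proof (intro mult_right_mono Dx0 divide_left_mono)
        show "(1 - \<alpha> - \<beta>) * (c / 2) \<le> c / 2" using ab c by (simp add: mult_le_cancel_right1)
        show "0 \<le> (1 + \<gamma>) * L" using coef L(1) by simp
        show "0 < c / 2 * ((1 - \<alpha> - \<beta>) * (c / 2))" using ab c by simp
      qed
      finally show "dist x xs \<le> (1 + \<gamma>) * L / ((1 - \<alpha> - \<beta>) * (c / 2)) * Dist x (T x)"
        using e2 unfolding d_def Dx_def by linarith
    qed
  qed
  show ?thesis using FixT SFixT P2 P3 by blast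
qed

end
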